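(* Fix a dataset $\mathbb D_N$ and a point $x\in\mathcal X$. Suppose the GP-CBF-SOCP is feasible at $x$, i.e. there exists $u\in\mathbb R^m$ with $$L_{\tilde f}B(x)+L_{\tilde g}B(x)u+\mu_B(x,u|\mathbb D_N)-\beta\sigma_B(x,u|\mathbb D_N)+\gamma(B(x))\ge0.$$ Then $$\begin{bmatrix}\widehat{L_fB}(x|\mathbb D_N)+\gamma(B(x))\\ \widehat{L_gB}(x|\mathbb D_N)^T\end{bmatrix}^T\Sigma_B(x|\mathbb D_N)^{-1}\begin{bmatrix}\widehat{L_fB}(x|\mathbb D_N)+\gamma(B(x))\\ \widehat{L_gB}(x|\mathbb D_N)^T\end{bmatrix}\ge\beta^2.$$
   Context: Consider the control-affine system $\dot x=f(x)+g(x)u$ with state $x\in\mathcal X\subset\mathbb R^n$ and input $u\in\mathbb R^m$. Here $f$ and $g$ are locally Lipschitz and unknown. A nominal model $\tilde f,\tilde g$ of the same type is available. Let $B:\mathcal X\to\mathbb R$ be continuously differentiable and let $\gamma$ be an extended class-$\mathcal K_\infty$ function. Lie derivatives: $L_{\tilde f}B(x)=\nabla B(x)\tilde f(x)\in\mathbb R$ and $L_{\tilde g}B(x)=\nabla B(x)\tilde g(x)\in\mathbb R^{1\times m}$; $L_fB$ and $L_gB$ are defined similarly. Set $\Delta_B(x,u)=(L_fB-L_{\tilde f}B)(x)+(L_gB-L_{\tilde g}B)(x)u$. A dataset $\mathbb D_N=\{((x_j,u_j),z_j)\}_{j=1}^N$ consists of measurements $z_j=\Delta_B(x_j,u_j)+\epsilon_j$.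 GP model: - Kernels $k_1,\dots,k_{m+1}$ on $\mathcal X$ are given, together with the affine dot product kernel $k_c((x,y),(x',y'))=y^T\mathrm{diag}(k_i(x,x'))_{i=1}^{m+1}y'$. - Let $y_j=[1,u_j^T]^T$, $\mathbf z=(z_j)_j$, let $\sigma_n>0$, and let $K_c$ be the $N\times N$ Gram matrix of $k_c$ on the data. - Let $K_{**}(x)=\mathrm{diag}(k_i(x,x))$, and let $K_{*Y}(x)\in\mathbb R^{(m+1)\times N}$ have entries $k_i(x,x_j)(y_j)_i$. - Define $m_B(x|\mathbb D_N)=K_{*Y}(K_c+\sigma_n^2I)^{-1}\mathbf z$ and $\Sigma_B(x|\mathbb D_N)=K_{**}-K_{*Y}(K_c+\sigma_n^2I)^{-1}K_{*Y}^T$. The matrix $\Sigma_B(x|\mathbb D_N)$ is positive definite. - The GP posterior mean and standard deviation are $\mu_B(x,u|\mathbb D_N)=m_B^T[1;u]$ and $\sigma_B(x,u|\mathbb D_N)=\sqrt{[1,u^T]\Sigma_B[1;u]}$. $\beta>0$ is a constant. Define $\widehat{L_fB}(x|\mathbb D_N)=L_{\tilde f}B(x)+(m_B)_1$ and $\widehat{L_gB}(x|\mathbb D_N)=L_{\tilde g}B(x)+((m_B)_2,\dots,(m_B)_{m+1})\in\mathbb R^{1\times m}$. The GP-CBF-SOCP at $x$ minimizes $\|u-u_{\text{ref}}(x)\|_2^2$ subject to the displayed constraint, where $u_{\text{ref}}$ is a reference controller. *)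

theory Defs
  imports "HOL-Analysis.Analysis"
begin

text \<open>Index type for R^(m+1): None is the first (drift) coordinate, Some j the j-th input.\<close>

definition ext_class_Kinf :: "(real \<Rightarrow> real) \<Rightarrow> bool" where
  "ext_class_Kinf \<gamma> \<longleftrightarrow> continuous_on UNIV \<gamma> \<and> strict_mono \<gamma> \<and> \<gamma> 0 = 0 \<and>
     filterlim \<gamma> at_top at_top \<and> filterlim \<gamma> at_bot at_bot"

definition locally_lipschitz_on :: "'a::metric_space set \<Rightarrow> ('a \<Rightarrow> 'b::metric_space) \<Rightarrow> bool" where
  "locally_lipschitz_on X h \<longleftrightarrow> (\<forall>x\<in>X. \<exists>e>0. \<exists>L. \<forall>y\<in>ball x e \<inter> X. \<forall>w\<in>ball x e \<inter> X.
      dist (h y) (h w) \<le> L * dist y w)"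

definition psd_kernel :: "('a \<Rightarrow> 'a \<Rightarrow> real) \<Rightarrow> bool" where
  "psd_kernel k \<longleftrightarrow> (\<forall>x y. k x y = k y x) \<and>
     (\<forall>(n::nat) (p::nat \<Rightarrow> 'a) (c::nat \<Rightarrow> real). (\<Sum>a<n. \<Sum>b<n. c a * c b * k (p a) (p b)) \<ge> 0)"

definition aug :: "real^'m \<Rightarrow> real^('m option)" where
  "aug u = (\<chi> i. case i of None \<Rightarrow> 1 | Some j \<Rightarrow> u $ j)"

definition Kc :: "('m option \<Rightarrow> 'x \<Rightarrow> 'x \<Rightarrow> real) \<Rightarrow> ('N \<Rightarrow> 'x) \<Rightarrow> ('N \<Rightarrow> real^'m)
     \<Rightarrow> real^'N::finite^'N" where
  "Kc k xs us = (\<chi> j l. \<Sum>i\<in>UNIV. (aug (us j)) $ i * k i (xs j) (xs l) * (aug (us l)) $ i)"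

definition Kss :: "('m option \<Rightarrow> 'x \<Rightarrow> 'x \<Rightarrow> real) \<Rightarrow> 'x \<Rightarrow> real^('m::finite option)^('m option)" where
  "Kss k x = (\<chi> i i'. if i = i' then k i x x else 0)"

definition KsY :: "('m option \<Rightarrow> 'x \<Rightarrow> 'x \<Rightarrow> real) \<Rightarrow> ('N \<Rightarrow> 'x) \<Rightarrow> ('N \<Rightarrow> real^'m) \<Rightarrow> 'x
     \<Rightarrow> real^'N::finite^('m::finite option)" where
  "KsY k xs us x = (\<chi> i j. k i x (xs j) * (aug (us j)) $ i)"

definition mB :: "('m option \<Rightarrow> 'x \<Rightarrow> 'x \<Rightarrow> real) \<Rightarrow> ('N \<Rightarrow> 'x) \<Rightarrow> ('N \<Rightarrow> real^'m) \<Rightarrow> real^'N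
     \<Rightarrow> real \<Rightarrow> 'x \<Rightarrow> real^('m::finite option)" where
  "mB k xs us z sn x =
     KsY k xs us x *v (matrix_inv (Kc k xs us + (sn\<^sup>2) *\<^sub>R mat 1) *v z)"

definition SigmaB :: "('m option \<Rightarrow> 'x \<Rightarrow> 'x \<Rightarrow> real) \<Rightarrow> ('N::finite \<Rightarrow> 'x) \<Rightarrow> ('N \<Rightarrow> real^'m)
     \<Rightarrow> real \<Rightarrow> 'x \<Rightarrow> real^('m::finite option)^('m option)" where
  "SigmaB k xs us sn x =
     Kss k x - KsY k xs us x ** matrix_inv (Kc k xs us + (sn\<^sup>2) *\<^sub>R mat 1) ** transpose (KsY k xs us x)"

definition muB where
  "muB k xs us z sn x u = mB k xs us z sn x \<bullet> aug u"

definition sigmaB where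
  "sigmaB k xs us sn x u = sqrt (aug u \<bullet> (SigmaB k xs us sn x *v aug u))"

definition LfB :: "(real^'n::finite \<Rightarrow> real^'n) \<Rightarrow> (real^'n \<Rightarrow> real^'n) \<Rightarrow> real^'n \<Rightarrow> real" where
  "LfB gradB f x = gradB x \<bullet> f x"

definition LgB :: "(real^'n \<Rightarrow> real^'n) \<Rightarrow> (real^'n \<Rightarrow> real^'m^'n) \<Rightarrow> real^'n::finite \<Rightarrow> real^'m::finite" where
  "LgB gradB g x = (\<chi> j. gradB x \<bullet> column j (g x))"

end

theory Submission
  imports Defs
begin
lemma pd_invertible:
  fixes S :: "real^'k^'k"
  assumes "\<forall>v. v \<noteq> 0 \<longrightarrow> v \<bullet> (S *v v) > 0"
  shows "invertible S"
proof -
  have "\<forall>x. S *v x = 0 \<longrightarrow> x = 0" using assms by force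
  then show ?thesis using matrix_left_invertible_ker invertible_left_inverse by blast
qed

lemma matrix_inv_props:
  fixes S :: "real^'k^'k"
  assumes "invertible S"
  shows "S ** matrix_inv S = mat 1" "matrix_inv S ** S = mat 1"
proof -
  have "\<exists>A'. S ** A' = mat 1 \<and> A' ** S = mat 1" using assms invertible_def by blast
  then have "S ** matrix_inv S = mat 1 \<and> matrix_inv S ** S = mat 1"
    unfolding matrix_inv_def by (rule someI_ex)
  then show "S ** matrix_inv S = mat 1" "matrix_inv S ** S = mat 1" by auto
qed

lemma matrix_inv_sym:
  fixes S :: "real^'k^'k"
  assumes "invertible S" "transpose S = S"
  shows "transpose (matrix_inv S) = matrix_inv S"
proof -
  let ?T = "matrix_inv S"
  have "transpose (?T ** S) = mat 1" using matrix_inv_props(2)[OF assms(1)] by simp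
  then have h: "S ** transpose ?T = mat 1" using assms(2) by (simp add: matrix_transpose_mul)
  have "?T = ?T ** (S ** transpose ?T)" using h by simp
  also have "\<dots> = (?T ** S) ** transpose ?T" by (simp add: matrix_mul_assoc)
  also have "\<dots> = transpose ?T" using matrix_inv_props(2)[OF assms(1)] by simp
  finally show ?thesis by simp
qed

lemma sym_dot:
  fixes S :: "real^'k^'k"
  assumes "transpose S = S"
  shows "(S *v w) \<bullet> y = w \<bullet> (S *v y)"
  by (metis assms dot_lmul_matrix inner_commute transpose_matrix_vector)

lemma core:
  fixes S :: "real^'k^'k" and a y :: "real^'k" and \<beta> :: real
  assumes sym: "transpose S = S" and pd: "\<forall>v. v \<noteq> 0 \<longrightarrow> v \<bullet> (S *v v) > 0"
    and y: "y \<noteq> 0" and b: "\<beta> > 0" and ay: "a \<bullet> y \<ge> \<beta> * sqrt (y \<bullet> (S *v y))"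
  shows "a \<bullet> (matrix_inv S *v a) \<ge> \<beta>\<^sup>2"
proof -
  have inv: "invertible S" using pd_invertible pd by blast
  define w where "w = matrix_inv S *v a"
  have Sw: "S *v w = a" unfolding w_def
    by (simp add: matrix_vector_mul_assoc matrix_inv_props(1)[OF inv])
  define q where "q = y \<bullet> (S *v y)"
  have q: "q > 0" using pd y q_def by auto
  define c where "c = w \<bullet> (S *v y)"
  have c: "c = a \<bullet> y" using sym_dot[OF sym, of w y] Sw c_def by simp
  have lhs: "a \<bullet> (matrix_inv S *v a) = w \<bullet> (S *v w)"
    using Sw w_def by (simp add: inner_commute)
  define t where "t = c / q"
  have "0 \<le> (w - t *\<^sub>R y) \<bullet> (S *v (w - t *\<^sub>R y))"
    using pd by (metis order.strict_implies_order order_refl inner_zero_left)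
  also have "\<dots> = w \<bullet> (S *v w) - 2 * t * c + t\<^sup>2 * q"
    using sym_dot[OF sym, of y w]
    by (simp add: matrix_vector_mult_diff_distrib matrix_vector_mult_scaleR inner_diff_left inner_diff_right
        c_def q_def power2_eq_square algebra_simps inner_commute)
  also have "\<dots> = w \<bullet> (S *v w) - c\<^sup>2 / q"
    using q by (simp add: t_def field_simps power2_eq_square)
  finally have "c\<^sup>2 / q \<le> w \<bullet> (S *v w)" by simp
  moreover have "\<beta>\<^sup>2 * q \<le> c\<^sup>2"
  proof -
    have "0 \<le> \<beta> * sqrt q" using b q by simp
    then have "(\<beta> * sqrt q)\<^sup>2 \<le> c\<^sup>2" using ay c q_def by (simp add: power_mono)
    then show ?thesis using q b by (simp add: power_mult_distrib)
  qed
  then have "\<beta>\<^sup>2 \<le> c\<^sup>2 / q" using q by (simp add: field_simps)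
  ultimately show ?thesis using lhs by simp
qed

lemma psd_fin:
  fixes K :: "'a \<Rightarrow> 'a \<Rightarrow> real" and p :: "'N::finite \<Rightarrow> 'a" and c :: "'N \<Rightarrow> real"
  assumes "psd_kernel K"
  shows "(\<Sum>j\<in>UNIV. \<Sum>l\<in>UNIV. c j * c l * K (p j) (p l)) \<ge> 0"
proof -
  obtain h where h: "bij_betw h {0..<card (UNIV::'N set)} (UNIV::'N set)"
    using ex_bij_betw_nat_finite[of "UNIV::'N set"] by auto
  let ?n = "card (UNIV::'N set)"
  have e: "\<And>g::'N \<Rightarrow> real. sum g UNIV = (\<Sum>a<?n. g (h a))"
    using sum.reindex_bij_betw[OF h] by (metis atLeast0LessThan)
  have "(\<Sum>j\<in>UNIV. \<Sum>l\<in>UNIV. c j * c l * K (p j) (p l))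
      = (\<Sum>a<?n. \<Sum>b<?n. (c \<circ> h) a * (c \<circ> h) b * K ((p \<circ> h) a) ((p \<circ> h) b))"
    by (simp add: e)
  also have "\<dots> \<ge> 0" using assms unfolding psd_kernel_def by blast
  finally show ?thesis .
qed

lemma Kc_psd:
  fixes k :: "'m::finite option \<Rightarrow> 'x \<Rightarrow> 'x \<Rightarrow> real" and xs :: "'N::finite \<Rightarrow> 'x"
  assumes "\<forall>i. psd_kernel (k i)"
  shows "v \<bullet> (Kc k xs us *v v) \<ge> 0"
proof -
  let ?t = "\<lambda>i j l. (v $ j * aug (us j) $ i) * (v $ l * aug (us l) $ i) * k i (xs j) (xs l)"
  have "v \<bullet> (Kc k xs us *v v) = (\<Sum>j\<in>UNIV. \<Sum>l\<in>UNIV. \<Sum>i\<in>UNIV. ?t i j l)"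
    unfolding inner_vec_def matrix_vector_mult_def Kc_def
    by (simp add: sum_distrib_left sum_distrib_right algebra_simps)
  also have "\<dots> = (\<Sum>j\<in>UNIV. \<Sum>i\<in>UNIV. \<Sum>l\<in>UNIV. ?t i j l)"
    by (rule sum.cong[OF refl], rule sum.swap)
  also have "\<dots> = (\<Sum>i\<in>UNIV. \<Sum>j\<in>UNIV. \<Sum>l\<in>UNIV. ?t i j l)"
    by (rule sum.swap)
  also have "\<dots> \<ge> 0"
    by (rule sum_nonneg, rule psd_fin) (use assms in auto)
  finally show ?thesis .
qed

lemma aug_inner:
  fixes b :: "real^('m::finite option)"
  shows "b \<bullet> aug u = b $ None + (\<Sum>j\<in>UNIV. b $ Some j * u $ j)"
proof -
  have "b \<bullet> aug u = (\<Sum>i\<in>insert None (range Some). b $ i * aug u $ i)"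
    unfolding inner_vec_def by (simp add: UNIV_option_conv[symmetric])
  also have "\<dots> = b $ None + (\<Sum>j\<in>UNIV. b $ Some j * u $ j)"
    by (subst sum.insert) (auto simp: sum.reindex aug_def)
  finally show ?thesis .
qed

lemma SigmaB_sym:
  fixes k :: "'m::finite option \<Rightarrow> 'x \<Rightarrow> 'x \<Rightarrow> real" and xs :: "'N::finite \<Rightarrow> 'x"
  assumes kernels: "\<forall>i. psd_kernel (k i)" and sn: "sn > 0"
  shows "transpose (SigmaB k xs us sn x) = SigmaB k xs us sn x"
proof -
  let ?A = "Kc k xs us + (sn\<^sup>2) *\<^sub>R mat 1"
  have ks: "\<And>i a b. k i a b = k i b a" using kernels unfolding psd_kernel_def by blast
  have symA: "transpose ?A = ?A"
    by (simp add: vec_eq_iff transpose_def Kc_def mat_def ks mult_ac)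
  have pd: "\<forall>v. v \<noteq> 0 \<longrightarrow> v \<bullet> (?A *v v) > 0"
  proof (intro allI impI)
    fix v :: "real^'N" assume "v \<noteq> 0"
    then have "v \<bullet> v > 0" by simp
    moreover have "?A *v v = Kc k xs us *v v + (sn\<^sup>2) *\<^sub>R v"
      by (simp add: matrix_vector_mult_add_rdistrib flip: scaleR_matrix_vector_assoc)
    moreover have "sn\<^sup>2 * (v \<bullet> v) > 0" using sn \<open>v \<bullet> v > 0\<close> by simp
    ultimately show "v \<bullet> (?A *v v) > 0"
      using Kc_psd[OF kernels, of v xs us] by (simp add: inner_add_right)
  qed
  have invA: "invertible ?A" using pd_invertible[OF pd] .
  have symI: "transpose (matrix_inv ?A) = matrix_inv ?A" using matrix_inv_sym[OF invA symA] .
  have t1: "transpose (KsY k xs us x ** matrix_inv ?A ** transpose (KsY k xs us x))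
      = KsY k xs us x ** matrix_inv ?A ** transpose (KsY k xs us x)"
    by (simp add: matrix_transpose_mul symI matrix_mul_assoc)
  have t2: "transpose (Kss k x) = Kss k x"
    by (simp add: vec_eq_iff transpose_def Kss_def)
  have td: "\<And>P Q :: real^('m option)^('m option). transpose (P - Q) = transpose P - transpose Q"
    by (simp add: vec_eq_iff transpose_def)
  show ?thesis unfolding SigmaB_def td t1 t2 ..
qed

theorem lemma3:
  fixes X :: "(real^'n::finite) set"
    and ft :: "real^'n \<Rightarrow> real^'n" and gt :: "real^'n \<Rightarrow> real^'m::finite^'n"
    and B :: "real^'n \<Rightarrow> real" and gradB :: "real^'n \<Rightarrow> real^'n"
    and \<gamma> :: "real \<Rightarrow> real"
    and k :: "'m option \<Rightarrow> real^'n \<Rightarrow> real^'n \<Rightarrow> real"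
    and xs :: "'N::finite \<Rightarrow> real^'n" and us :: "'N \<Rightarrow> real^'m" and z :: "real^'N"
    and sn \<beta> :: real and x :: "real^'n"
  assumes ft_lip: "locally_lipschitz_on X ft" and gt_lip: "locally_lipschitz_on X gt"
    and B_C1: "\<forall>y\<in>X. (B has_derivative (\<lambda>h. gradB y \<bullet> h)) (at y)" "continuous_on X gradB"
    and gamma: "ext_class_Kinf \<gamma>"
    and kernels: "\<forall>i. psd_kernel (k i)"
    and data: "\<forall>j. xs j \<in> X"
    and sn_pos: "sn > 0" and beta_pos: "\<beta> > 0"
    and x_in: "x \<in> X"
    and Sigma_pd: "\<forall>v. v \<noteq> 0 \<longrightarrow> v \<bullet> (SigmaB k xs us sn x *v v) > 0"
    and feasible: "\<exists>u::real^'m. LfB gradB ft x + LgB gradB gt x \<bullet> u + muB k xs us z sn x u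
                      - \<beta> * sigmaB k xs us sn x u + \<gamma> (B x) \<ge> 0"
  shows "let hatLf = LfB gradB ft x + mB k xs us z sn x $ None;
             hatLg = LgB gradB gt x + (\<chi> j. mB k xs us z sn x $ Some j);
             a = (\<chi> i. case i of None \<Rightarrow> hatLf + \<gamma> (B x) | Some j \<Rightarrow> hatLg $ j)
         in a \<bullet> (matrix_inv (SigmaB k xs us sn x) *v a) \<ge> \<beta>\<^sup>2"
proof -
  obtain u :: "real^'m" where u: "LfB gradB ft x + LgB gradB gt x \<bullet> u + muB k xs us z sn x u
                      - \<beta> * sigmaB k xs us sn x u + \<gamma> (B x) \<ge> 0" using feasible by blast
  define m where "m = mB k xs us z sn x"
  define S where "S = SigmaB k xs us sn x"
  define a :: "real^('m option)" where "a = (\<chi> i. case i of None \<Rightarrow> LfB gradB ft x + m $ None + \<gamma> (B x)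
      | Some j \<Rightarrow> (LgB gradB gt x + (\<chi> j. m $ Some j)) $ j)"
  have yne: "aug u \<noteq> 0"
  proof
    assume "aug u = 0"
    then have "aug u $ None = 0" by simp
    then show False by (simp add: aug_def)
  qed
  have "a \<bullet> aug u = LfB gradB ft x + m $ None + \<gamma> (B x)
      + (\<Sum>j\<in>UNIV. (LgB gradB gt x $ j + m $ Some j) * u $ j)"
    unfolding aug_inner by (simp add: a_def)
  also have "\<dots> = LfB gradB ft x + LgB gradB gt x \<bullet> u + muB k xs us z sn x u + \<gamma> (B x)"
    unfolding muB_def aug_inner m_def[symmetric]
    by (simp add: inner_vec_def algebra_simps sum.distrib)
  finally have "a \<bullet> aug u \<ge> \<beta> * sqrt (aug u \<bullet> (S *v aug u))"
    using u unfolding sigmaB_def S_def by linarith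
  then have "a \<bullet> (matrix_inv S *v a) \<ge> \<beta>\<^sup>2"
    using core[OF SigmaB_sym[OF kernels sn_pos] _ yne beta_pos] Sigma_pd
    unfolding S_def by blast
  then show ?thesis unfolding Let_def a_def m_def S_def .
qed

end
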